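(* Let $(D, c, \mathcal{B})$ be an instance of 2-Layer General Transshipment with parts $U, W$ (so $A(D) \subseteq U \times W$) and integral capacities $c: A(D) \to \mathbb{N}$. Suppose that for each $v \in V(D)$, either $B_v \subseteq \mathbb{Z}$ or $B_v = [c_v, d_v]$ for some integers $c_v \le d_v$. If $(D, c, \mathcal{B})$ has a $\mathcal{B}$-transshipment, then it has a maximum-value $\mathcal{B}$-transshipment that is integral, i.e., assigns an integer value to every arc.
   Context: A digraph $D$ is 2-layered with parts $U,W$ if $V(D)$ is the disjoint union of $U$ and $W$ and $A(D) \subseteq U \times W$. An instance of 2-Layer General Transshipment consists of a 2-layered digraph $D$ with parts $U,W$, capacities $c: A(D) \to \mathbb{Q}_{\ge 0}$, and sets $\mathcal{B} = \{B_v : v \in V(D)\}$ with $B_v \subseteq \mathbb{Q}_{\ge 0}$ for $v \in U$ and $B_v \subseteq \mathbb{Q}_{\le 0}$ for $v \in W$. For $f: A(D) \to \mathbb{Q}_{\ge 0}$ the excess at $v$ is $f_\Sigma(v) = \sum_{(v,x)\in A(D)} f(v,x) - \sum_{(x,v)\in A(D)} f(x,v)$. A $\mathcal{B}$-transshipment is an $f: A(D) \to \mathbb{Q}_{\ge 0}$ with $f(a) \le c(a)$ for every arc $a$ and $f_\Sigma(v) \in B_v$ for all $v$; its value is $\mathrm{val}(f) = \sum_{u \in U} f_\Sigma(u)$. *)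

theory Defs
  imports Complex_Main
begin

text \<open>A 2-layered digraph with parts U, W: vertex set is the disjoint union of U and W,
  arcs A are a subset of U \<times> W. Arc functions are functions on pairs, only their
  values on A matter.\<close>

definition two_layered :: "'v set \<Rightarrow> 'v set \<Rightarrow> ('v \<times> 'v) set \<Rightarrow> bool" where
  "two_layered U W A \<longleftrightarrow> finite U \<and> finite W \<and> U \<inter> W = {} \<and> A \<subseteq> U \<times> W"

definition gt_instance ::
  "'v set \<Rightarrow> 'v set \<Rightarrow> ('v \<times> 'v) set \<Rightarrow> ('v \<times> 'v \<Rightarrow> rat) \<Rightarrow> ('v \<Rightarrow> rat set) \<Rightarrow> bool" where
  "gt_instance U W A c B \<longleftrightarrow> two_layered U W A
     \<and> (\<forall>a\<in>A. c a \<ge> 0)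
     \<and> (\<forall>v\<in>U. B v \<subseteq> {x. x \<ge> 0})
     \<and> (\<forall>v\<in>W. B v \<subseteq> {x. x \<le> 0})"

definition excess :: "('v \<times> 'v) set \<Rightarrow> ('v \<times> 'v \<Rightarrow> rat) \<Rightarrow> 'v \<Rightarrow> rat" where
  "excess A f v = (\<Sum>a\<in>{a\<in>A. fst a = v}. f a) - (\<Sum>a\<in>{a\<in>A. snd a = v}. f a)"

definition is_transshipment ::
  "'v set \<Rightarrow> 'v set \<Rightarrow> ('v \<times> 'v) set \<Rightarrow> ('v \<times> 'v \<Rightarrow> rat) \<Rightarrow> ('v \<Rightarrow> rat set)
   \<Rightarrow> ('v \<times> 'v \<Rightarrow> rat) \<Rightarrow> bool" where
  "is_transshipment U W A c B f \<longleftrightarrow>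
     (\<forall>a\<in>A. 0 \<le> f a \<and> f a \<le> c a) \<and> (\<forall>v\<in>U \<union> W. excess A f v \<in> B v)"

definition tval :: "'v set \<Rightarrow> ('v \<times> 'v) set \<Rightarrow> ('v \<times> 'v \<Rightarrow> rat) \<Rightarrow> rat" where
  "tval U A f = (\<Sum>u\<in>U. excess A f u)"

end

theory Submission
  imports Defs
begin

lemma excess_alt:
  assumes "finite F"
  shows "excess F d v = (\<Sum>a\<in>F. (if fst a = v then d a else 0) - (if snd a = v then d a else 0))"
  using assms by (simp add: excess_def sum.inter_filter sum_subtractf)

lemma excess_lin:
  assumes "finite F"
  shows "excess F (\<lambda>a. f a + k * d a) v = excess F f v + k * excess F d v"
proof -
  have "excess F f v + k * excess F d v = (\<Sum>a\<in>F. ((if fst a = v then f a else 0) - (if snd a = v then f a else 0))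
     + k * ((if fst a = v then d a else 0) - (if snd a = v then d a else 0)))"
    unfolding excess_alt[OF assms] by (simp add: sum.distrib sum_distrib_left)
  also have "\<dots> = excess F (\<lambda>a. f a + k * d a) v"
    unfolding excess_alt[OF assms] by (rule sum.cong) (auto simp: algebra_simps)
  finally show ?thesis by simp
qed

lemma excess_scale:
  assumes "finite F"
  shows "excess F (\<lambda>a. k * d a) v = k * excess F d v"
  using excess_lin[OF assms, of "\<lambda>_. 0" k d v] by (simp add: excess_def)

lemma tval_lin:
  assumes "finite F"
  shows "tval U F (\<lambda>a. f a + k * d a) = tval U F f + k * tval U F d"
  by (simp add: tval_def excess_lin[OF assms] sum.distrib sum_distrib_left)

lemma tval_scale:
  assumes "finite F"
  shows "tval U F (\<lambda>a. k * d a) = k * tval U F d"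
  by (simp add: tval_def excess_scale[OF assms] sum_distrib_left)

lemma excess_restrict:
  assumes "finite A" "F \<subseteq> A" "\<forall>a. a \<notin> F \<longrightarrow> d a = 0"
  shows "excess A d v = excess F d v"
proof -
  have fF: "finite F" using assms finite_subset by blast
  show ?thesis unfolding excess_alt[OF assms(1)] excess_alt[OF fF]
    by (rule sum.mono_neutral_right[OF assms(1,2)]) (use assms(3) in auto)
qed

lemma excess_ind:
  assumes "finite F" "e \<in> F"
  shows "excess F (\<lambda>a. if a = e then 1 else 0) v = (if fst e = v then 1 else 0) - (if snd e = v then 1 else 0)"
proof -
  have "excess F (\<lambda>a. if a = e then 1 else 0) v =
      (\<Sum>a\<in>F. if a = e then ((if fst e = v then 1 else 0) - (if snd e = v then 1 else 0)) else 0)"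
    unfolding excess_alt[OF assms(1)] by (rule sum.cong) auto
  also have "\<dots> = (if fst e = v then 1 else 0) - (if snd e = v then 1 else 0)"
    using assms by simp
  finally show ?thesis .
qed

lemma excess_sum_zero:
  assumes "finite F" "finite S" "fst ` F \<subseteq> S" "snd ` F \<subseteq> S"
  shows "(\<Sum>v\<in>S. excess F d v) = 0"
proof -
  have "(\<Sum>v\<in>S. excess F d v) = (\<Sum>a\<in>F. \<Sum>v\<in>S. (if fst a = v then d a else 0) - (if snd a = v then d a else 0))"
    unfolding excess_alt[OF assms(1)] by (rule sum.swap)
  also have "\<dots> = (\<Sum>a\<in>F. d a - d a)"
    by (rule sum.cong) (use assms in \<open>auto simp: sum_subtractf\<close>)
  finally show ?thesis by simp
qed

lemma path_lemma:
  assumes "finite F" "\<forall>a\<in>F. fst a \<noteq> snd a" "e0 \<in> F" "fst e0 = x \<or> snd e0 = x"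
    "\<forall>v\<in>I - {x}. card {a\<in>F. fst a = v \<or> snd a = v} \<noteq> 1"
  shows "\<exists>d. (\<forall>a. a \<notin> F \<longrightarrow> d a = 0) \<and> (\<exists>a\<in>F. d a \<noteq> (0::rat)) \<and> (\<forall>v\<in>I - {x}. excess F d v = 0)"
  using assms
proof (induction "card F" arbitrary: F x I e0 rule: less_induct)
  case less
  define y where "y = (if fst e0 = x then snd e0 else fst e0)"
  have yx: "y \<noteq> x" using less.prems(2,3,4) unfolding y_def by auto
  have ye: "fst e0 = y \<or> snd e0 = y" unfolding y_def by auto
  have exy: "\<And>v. v \<noteq> x \<Longrightarrow> v \<noteq> y \<Longrightarrow> fst e0 \<noteq> v \<and> snd e0 \<noteq> v"
    using less.prems(4) unfolding y_def by auto
  define ie where "ie = (\<lambda>a. if a = e0 then (1::rat) else 0)"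
  have exc_ie: "\<And>v. excess F ie v = (if fst e0 = v then 1 else 0) - (if snd e0 = v then 1 else 0)"
    unfolding ie_def using excess_ind[OF less.prems(1,3)] .
  show ?case
  proof (cases "y \<in> I")
    case False
    show ?thesis
    proof (intro exI conjI)
      show "\<forall>a. a \<notin> F \<longrightarrow> ie a = 0" using less.prems(3) by (auto simp: ie_def)
      show "\<exists>a\<in>F. ie a \<noteq> 0" using less.prems(3) by (auto simp: ie_def)
      show "\<forall>v\<in>I - {x}. excess F ie v = 0"
      proof
        fix v assume v: "v \<in> I - {x}"
        then have "v \<noteq> y" using False by auto
        then show "excess F ie v = 0" using exy[of v] v exc_ie[of v] by simp
      qed
    qed
  next
    case True
    define F' where "F' = F - {e0}"
    have fF': "finite F'" using less.prems(1) by (simp add: F'_def)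
    have card: "card F' < card F" unfolding F'_def
      using less.prems(1,3) by (meson card_Diff1_less)
    have "y \<in> I - {x}" using True yx by simp
    then have c1: "card {a\<in>F. fst a = y \<or> snd a = y} \<noteq> 1" using less.prems(5) by blast
    have "\<exists>e1\<in>F'. fst e1 = y \<or> snd e1 = y"
    proof (rule ccontr)
      assume "\<not> ?thesis"
      then have "{a\<in>F. fst a = y \<or> snd a = y} = {e0}" using ye less.prems(3) by (auto simp: F'_def)
      then show False using c1 by simp
    qed
    then obtain e1 where e1: "e1 \<in> F'" "fst e1 = y \<or> snd e1 = y" by blast
    have deg': "\<forall>v\<in>(I - {x}) - {y}. card {a\<in>F'. fst a = v \<or> snd a = v} \<noteq> 1"
    proof
      fix v assume v: "v \<in> (I - {x}) - {y}"
      then have "{a\<in>F'. fst a = v \<or> snd a = v} = {a\<in>F. fst a = v \<or> snd a = v}"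
        using exy[of v] by (auto simp: F'_def)
      then show "card {a\<in>F'. fst a = v \<or> snd a = v} \<noteq> 1" using v less.prems(5) by auto
    qed
    have lp': "\<forall>a\<in>F'. fst a \<noteq> snd a" using less.prems(2) by (auto simp: F'_def)
    obtain d' where d': "\<forall>a. a \<notin> F' \<longrightarrow> d' a = 0" "\<exists>a\<in>F'. d' a \<noteq> 0"
        "\<forall>v\<in>(I - {x}) - {y}. excess F' d' v = 0"
      using less.hyps[OF card fF' lp' e1(1) e1(2) deg'] by blast
    define \<sigma> where "\<sigma> = excess F ie y"
    have s0: "\<sigma> \<noteq> 0" unfolding \<sigma>_def exc_ie using ye less.prems(2,3) by auto
    define k where "k = - excess F' d' y / \<sigma>"
    define d where "d = (\<lambda>a. d' a + k * ie a)"
    have F'F: "F' \<subseteq> F" by (auto simp: F'_def)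
    have exd: "\<And>v. excess F d v = excess F' d' v + k * excess F ie v"
      unfolding d_def excess_lin[OF less.prems(1)]
      using excess_restrict[OF less.prems(1) F'F d'(1)] by simp
    show ?thesis
    proof (intro exI conjI)
      show "\<forall>a. a \<notin> F \<longrightarrow> d a = 0" using d'(1) less.prems(3) by (auto simp: d_def ie_def F'_def)
      show "\<exists>a\<in>F. d a \<noteq> 0" using d'(2) by (auto simp: d_def ie_def F'_def)
      show "\<forall>v\<in>I - {x}. excess F d v = 0"
      proof
        fix v assume v: "v \<in> I - {x}"
        show "excess F d v = 0"
        proof (cases "v = y")
          case True
          then show ?thesis using s0 by (simp add: exd k_def \<sigma>_def)
        next
          case False
          then show ?thesis using exy[of v] v d'(3) by (simp add: exd exc_ie)
        qed
      qed
    qed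
  qed
qed

lemma dir_exists:
  assumes "finite F" "F \<noteq> {}" "\<forall>a\<in>F. fst a \<noteq> snd a"
    "\<forall>v\<in>I. card {a\<in>F. fst a = v \<or> snd a = v} \<noteq> 1"
  shows "\<exists>d. (\<forall>a. a \<notin> F \<longrightarrow> d a = 0) \<and> (\<exists>a\<in>F. d a \<noteq> (0::rat)) \<and> (\<forall>v\<in>I. excess F d v = 0)"
proof (cases "\<exists>e\<in>F. fst e \<notin> I \<or> snd e \<notin> I")
  case True
  then obtain e x where e: "e \<in> F" "fst e = x \<or> snd e = x" "x \<notin> I" by blast
  have "\<forall>v\<in>I - {x}. card {a\<in>F. fst a = v \<or> snd a = v} \<noteq> 1" using assms(4) by blast
  from path_lemma[OF assms(1,3) e(1,2) this] show ?thesis using e(3) by auto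
next
  case False
  obtain e where e: "e \<in> F" using assms(2) by blast
  define x where "x = fst e"
  have "\<forall>v\<in>I - {x}. card {a\<in>F. fst a = v \<or> snd a = v} \<noteq> 1" using assms(4) by blast
  from path_lemma[OF assms(1,3) e, of x, OF _ this] obtain d where
    d: "\<forall>a. a \<notin> F \<longrightarrow> d a = 0" "\<exists>a\<in>F. d a \<noteq> 0" "\<forall>v\<in>I - {x}. excess F d v = 0"
    by (auto simp: x_def)
  have z: "excess F d v = 0" if "v \<noteq> x" for v
  proof (cases "v \<in> I")
    case True then show ?thesis using d(3) that by auto
  next
    case False
    have e1: "{a\<in>F. fst a = v} = {}" "{a\<in>F. snd a = v} = {}" using False \<open>\<not> (\<exists>e\<in>F. fst e \<notin> I \<or> snd e \<notin> I)\<close> by auto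
    show ?thesis unfolding excess_def e1 by simp
  qed
  define S where "S = fst ` F \<union> snd ` F"
  have fS: "finite S" using assms(1) by (simp add: S_def)
  have xS: "x \<in> S" using e by (simp add: S_def x_def)
  have "0 = (\<Sum>v\<in>S. excess F d v)" using excess_sum_zero[OF assms(1) fS] by (simp add: S_def)
  also have "\<dots> = excess F d x + (\<Sum>v\<in>S - {x}. excess F d v)" using sum.remove[OF fS xS] .
  also have "(\<Sum>v\<in>S - {x}. excess F d v) = 0" using z by (intro sum.neutral) auto
  finally have "excess F d x = 0" by simp
  then have "\<forall>v\<in>I. excess F d v = 0" using z by (metis (full_types))
  then show ?thesis using d(1,2) by blast
qed

definition rm :: "rat \<Rightarrow> rat \<Rightarrow> rat" where
  "rm x s = (if s > 0 then (of_int \<lceil>x\<rceil> - x) / s else (x - of_int \<lfloor>x\<rfloor>) / (- s))"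

lemma rm_pos: "x \<notin> \<int> \<Longrightarrow> s \<noteq> 0 \<Longrightarrow> rm x s > 0"
proof -
  assume x: "x \<notin> \<int>" and s: "s \<noteq> 0"
  have "of_int \<lfloor>x\<rfloor> \<noteq> x" "of_int \<lceil>x\<rceil> \<noteq> x" using x Ints_of_int by metis+
  then have "of_int \<lfloor>x\<rfloor> < x" "x < of_int \<lceil>x\<rceil>"
    using of_int_floor_le[of x] le_of_int_ceiling[of x] by linarith+
  then show ?thesis
  proof (cases "s > 0")
    case True
    then show ?thesis using \<open>x < of_int \<lceil>x\<rceil>\<close> unfolding rm_def by simp
  next
    case False
    then have "- s > 0" using s by simp
    moreover have "x - of_int \<lfloor>x\<rfloor> > 0" using \<open>of_int \<lfloor>x\<rfloor> < x\<close> by simp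
    ultimately show ?thesis using False unfolding rm_def by (simp only: if_False) (rule divide_pos_pos)
  qed
qed

lemma rm_bounds:
  assumes "s \<noteq> 0" "0 \<le> e" "e \<le> rm x s"
  shows "of_int \<lfloor>x\<rfloor> \<le> x + e * s \<and> x + e * s \<le> of_int \<lceil>x\<rceil>"
proof (cases "s > 0")
  case True
  then have "e * s \<le> of_int \<lceil>x\<rceil> - x" using assms(3) by (simp add: rm_def pos_le_divide_eq)
  moreover have "0 \<le> e * s" using True assms(2) by simp
  ultimately show ?thesis using of_int_floor_le[of x] by linarith
next
  case False
  then have sn: "s < 0" using assms(1) by simp
  have r: "rm x s = (x - of_int \<lfloor>x\<rfloor>) / (- s)" using sn by (simp add: rm_def)
  have "e * (- s) \<le> x - of_int \<lfloor>x\<rfloor>" using assms(3) sn unfolding r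
    by (subst (asm) pos_le_divide_eq) simp_all
  moreover have "e * s \<le> 0" using sn assms(2) by (simp add: mult_nonneg_nonpos)
  ultimately show ?thesis using le_of_int_ceiling[of x] by (simp add: algebra_simps) linarith
qed

lemma rm_hit:
  assumes "s \<noteq> 0"
  shows "x + rm x s * s \<in> \<int>"
proof (cases "s > 0")
  case True then show ?thesis by (simp add: rm_def)
next
  case False then show ?thesis using assms by (simp add: rm_def)
qed

lemma step:
  fixes g d :: "'v \<times> 'v \<Rightarrow> rat"
  assumes fA: "finite A" and fV: "finite V" and cI: "\<forall>a\<in>A. c a \<in> \<int>"
    and lu: "\<forall>v\<in>V. l v \<in> \<int> \<and> u v \<in> \<int>"
    and garc: "\<forall>a\<in>A. 0 \<le> g a \<and> g a \<le> c a"
    and gv: "\<forall>v\<in>V. l v \<le> excess A g v \<and> excess A g v \<le> u v"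
    and dF: "\<forall>a. d a \<noteq> 0 \<longrightarrow> a \<in> A \<and> g a \<notin> \<int>"
    and a1: "a1 \<in> A" "d a1 \<noteq> 0"
    and dv: "\<forall>v. excess A d v \<noteq> 0 \<longrightarrow> excess A g v \<notin> \<int>"
    and tv: "tval U A d \<ge> 0"
  shows "\<exists>g'. (\<forall>a\<in>A. 0 \<le> g' a \<and> g' a \<le> c a) \<and> (\<forall>v\<in>V. l v \<le> excess A g' v \<and> excess A g' v \<le> u v)
     \<and> tval U A g \<le> tval U A g'
     \<and> card {a\<in>A. g' a \<notin> \<int>} + card {v\<in>V. excess A g' v \<notin> \<int>}
       < card {a\<in>A. g a \<notin> \<int>} + card {v\<in>V. excess A g v \<notin> \<int>}"
proof -
  define Ad where "Ad = {a\<in>A. d a \<noteq> 0}"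
  define Vd where "Vd = {v\<in>V. excess A d v \<noteq> 0}"
  define R where "R = (\<lambda>a. rm (g a) (d a)) ` Ad \<union> (\<lambda>v. rm (excess A g v) (excess A d v)) ` Vd"
  have fR: "finite R" using fA fV by (simp add: R_def Ad_def Vd_def)
  have "a1 \<in> Ad" using a1 by (simp add: Ad_def)
  then have neR: "R \<noteq> {}" unfolding R_def by blast
  have Rpos: "\<forall>r\<in>R. r > 0" using dF dv rm_pos by (auto simp: R_def Ad_def Vd_def)
  define e where "e = Min R"
  have eR: "e \<in> R" using fR neR by (simp add: e_def)
  have e0: "e > 0" using eR Rpos by blast
  have ele: "\<forall>r\<in>R. e \<le> r" using fR by (simp add: e_def)
  define g' where "g' = (\<lambda>a. g a + e * d a)"
  have exc': "\<And>v. excess A g' v = excess A g v + e * excess A d v"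
    unfolding g'_def using excess_lin[OF fA] .
  have arcs: "\<forall>a\<in>A. 0 \<le> g' a \<and> g' a \<le> c a"
  proof
    fix a assume a: "a \<in> A"
    show "0 \<le> g' a \<and> g' a \<le> c a"
    proof (cases "d a = 0")
      case True then show ?thesis using garc a by (simp add: g'_def)
    next
      case False
      then have "a \<in> Ad" using a by (simp add: Ad_def)
      then have "e \<le> rm (g a) (d a)" using ele by (auto simp: R_def)
      from rm_bounds[OF False less_imp_le[OF e0] this]
      have b: "of_int \<lfloor>g a\<rfloor> \<le> g' a \<and> g' a \<le> of_int \<lceil>g a\<rceil>" by (simp add: g'_def)
      have "0 \<le> (of_int \<lfloor>g a\<rfloor> :: rat)" using garc a by simp
      moreover obtain k where k: "c a = of_int k" using cI a Ints_cases by metis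
      have "g a \<le> of_int k" using garc a k by auto
      then have "\<lceil>g a\<rceil> \<le> k" by (simp add: ceiling_le_iff)
      then have "(of_int \<lceil>g a\<rceil> :: rat) \<le> c a" using k by simp
      ultimately show ?thesis using b by linarith
    qed
  qed
  have verts: "\<forall>v\<in>V. l v \<le> excess A g' v \<and> excess A g' v \<le> u v"
  proof
    fix v assume v: "v \<in> V"
    show "l v \<le> excess A g' v \<and> excess A g' v \<le> u v"
    proof (cases "excess A d v = 0")
      case True then show ?thesis using gv v by (simp add: exc')
    next
      case False
      then have "v \<in> Vd" using v by (simp add: Vd_def)
      then have "e \<le> rm (excess A g v) (excess A d v)" using ele by (auto simp: R_def)
      from rm_bounds[OF False less_imp_le[OF e0] this]
      have b: "of_int \<lfloor>excess A g v\<rfloor> \<le> excess A g' v \<and> excess A g' v \<le> of_int \<lceil>excess A g v\<rceil>"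
        by (simp add: exc')
      obtain k where k: "l v = of_int k" using lu v Ints_cases by metis
      have "of_int k \<le> excess A g v" using gv v k by auto
      then have "k \<le> \<lfloor>excess A g v\<rfloor>" by (simp add: le_floor_iff)
      then have 1: "l v \<le> of_int \<lfloor>excess A g v\<rfloor>" using k by simp
      obtain k' where k': "u v = of_int k'" using lu v Ints_cases by metis
      have "excess A g v \<le> of_int k'" using gv v k' by auto
      then have "\<lceil>excess A g v\<rceil> \<le> k'" by (simp add: ceiling_le_iff)
      then have "of_int \<lceil>excess A g v\<rceil> \<le> u v" using k' by simp
      then show ?thesis using b 1 by linarith
    qed
  qed
  have val: "tval U A g \<le> tval U A g'"
    unfolding g'_def tval_lin[OF fA] using e0 tv by simp
  have sub1: "{a\<in>A. g' a \<notin> \<int>} \<subseteq> {a\<in>A. g a \<notin> \<int>}"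
  proof (intro subsetI, elim CollectE conjE, intro CollectI conjI)
    fix a assume a: "a \<in> A" "g' a \<notin> \<int>"
    show "a \<in> A" by fact
    show "g a \<notin> \<int>"
    proof (cases "d a = 0")
      case True then show ?thesis using a by (simp add: g'_def)
    next
      case False then show ?thesis using dF by blast
    qed
  qed
  have sub2: "{v\<in>V. excess A g' v \<notin> \<int>} \<subseteq> {v\<in>V. excess A g v \<notin> \<int>}"
  proof (intro subsetI, elim CollectE conjE, intro CollectI conjI)
    fix v assume v: "v \<in> V" "excess A g' v \<notin> \<int>"
    show "v \<in> V" by fact
    show "excess A g v \<notin> \<int>"
    proof (cases "excess A d v = 0")
      case True then show ?thesis using v by (simp add: exc')
    next
      case False then show ?thesis using dv by blast
    qed
  qed
  have fin1: "finite {a\<in>A. g a \<notin> \<int>}" using fA by simp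
  have fin2: "finite {v\<in>V. excess A g v \<notin> \<int>}" using fV by simp
  have meas: "card {a\<in>A. g' a \<notin> \<int>} + card {v\<in>V. excess A g' v \<notin> \<int>}
       < card {a\<in>A. g a \<notin> \<int>} + card {v\<in>V. excess A g v \<notin> \<int>}"
  proof (cases "e \<in> (\<lambda>a. rm (g a) (d a)) ` Ad")
    case True
    then obtain a0 where a0: "a0 \<in> Ad" "e = rm (g a0) (d a0)" by blast
    then have "g' a0 \<in> \<int>" using rm_hit[of "d a0" "g a0"] by (simp add: g'_def Ad_def)
    moreover have "a0 \<in> {a\<in>A. g a \<notin> \<int>}" using a0(1) dF unfolding Ad_def by blast
    ultimately have "{a\<in>A. g' a \<notin> \<int>} \<subset> {a\<in>A. g a \<notin> \<int>}" using sub1 by blast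
    then have "card {a\<in>A. g' a \<notin> \<int>} < card {a\<in>A. g a \<notin> \<int>}" using fin1 psubset_card_mono by blast
    moreover have "card {v\<in>V. excess A g' v \<notin> \<int>} \<le> card {v\<in>V. excess A g v \<notin> \<int>}"
      using fin2 sub2 card_mono by blast
    ultimately show ?thesis by linarith
  next
    case False
    then obtain v0 where v0: "v0 \<in> Vd" "e = rm (excess A g v0) (excess A d v0)" using eR by (auto simp: R_def)
    then have "excess A g' v0 \<in> \<int>" using rm_hit[of "excess A d v0" "excess A g v0"] by (simp add: exc' Vd_def)
    moreover have "v0 \<in> {v\<in>V. excess A g v \<notin> \<int>}" using v0 dv by (simp add: Vd_def)
    ultimately have "{v\<in>V. excess A g' v \<notin> \<int>} \<subset> {v\<in>V. excess A g v \<notin> \<int>}" using sub2 by blast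
    then have "card {v\<in>V. excess A g' v \<notin> \<int>} < card {v\<in>V. excess A g v \<notin> \<int>}" using fin2 psubset_card_mono by blast
    moreover have "card {a\<in>A. g' a \<notin> \<int>} \<le> card {a\<in>A. g a \<notin> \<int>}"
      using fin1 sub1 card_mono by blast
    ultimately show ?thesis by linarith
  qed
  show ?thesis using arcs verts val meas by blast
qed

lemma core:
  fixes g :: "'v \<times> 'v \<Rightarrow> rat"
  assumes fA: "finite A" and fV: "finite V" and cI: "\<forall>a\<in>A. c a \<in> \<int>"
    and lu: "\<forall>v\<in>V. l v \<in> \<int> \<and> u v \<in> \<int>"
    and loop: "\<forall>a\<in>A. fst a \<noteq> snd a"
  shows "(\<forall>a\<in>A. 0 \<le> g a \<and> g a \<le> c a) \<Longrightarrow> (\<forall>v\<in>V. l v \<le> excess A g v \<and> excess A g v \<le> u v)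
    \<Longrightarrow> \<exists>f. (\<forall>a\<in>A. 0 \<le> f a \<and> f a \<le> c a) \<and> (\<forall>v\<in>V. l v \<le> excess A f v \<and> excess A f v \<le> u v)
       \<and> (\<forall>a\<in>A. f a \<in> \<int>) \<and> tval U A g \<le> tval U A f"
proof (induction "card {a\<in>A. g a \<notin> \<int>} + card {v\<in>V. excess A g v \<notin> \<int>}" arbitrary: g rule: less_induct)
  case less
  define F where "F = {a\<in>A. g a \<notin> \<int>}"
  show ?case
  proof (cases "F = {}")
    case True
    then have "\<forall>a\<in>A. g a \<in> \<int>" by (auto simp: F_def)
    then show ?thesis using less.prems by blast
  next
    case False
    define I where "I = {v. excess A g v \<in> \<int>}"
    have FA: "F \<subseteq> A" by (auto simp: F_def)
    have fF: "finite F" using fA by (simp add: F_def)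
    have loopF: "\<forall>a\<in>F. fst a \<noteq> snd a" using loop FA by blast
    have deg: "\<forall>v\<in>I. card {a\<in>F. fst a = v \<or> snd a = v} \<noteq> 1"
    proof
      fix v assume vI: "v \<in> I"
      show "card {a\<in>F. fst a = v \<or> snd a = v} \<noteq> 1"
      proof
        assume "card {a\<in>F. fst a = v \<or> snd a = v} = 1"
        then obtain a0 where a0: "{a\<in>F. fst a = v \<or> snd a = v} = {a0}" by (meson card_1_singletonE)
        then have a0F: "a0 \<in> F" and a0v: "fst a0 = v \<or> snd a0 = v" by auto
        have a0A: "a0 \<in> A" using a0F FA by blast
        define h where "h = (\<lambda>a. (if fst a = v then g a else 0) - (if snd a = v then g a else 0))"
        have ex: "excess A g v = h a0 + sum h (A - {a0})"
          unfolding excess_alt[OF fA] h_def[symmetric] using sum.remove[OF fA a0A] .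
        have "sum h (A - {a0}) \<in> \<int>"
        proof (rule Ints_sum)
          fix a assume a: "a \<in> A - {a0}"
          show "h a \<in> \<int>"
          proof (cases "fst a = v \<or> snd a = v")
            case True
            then have "a \<notin> F" using a a0 by blast
            then have "g a \<in> \<int>" using a by (simp add: F_def)
            then show ?thesis unfolding h_def by (intro Ints_diff) auto
          next
            case False then show ?thesis by (simp add: h_def)
          qed
        qed
        moreover have "excess A g v \<in> \<int>" using vI by (simp add: I_def)
        ultimately have "h a0 \<in> \<int>" using ex by (metis Ints_diff add_diff_cancel_right')
        moreover have "h a0 = g a0 \<or> h a0 = - g a0" using a0v loop a0A by (auto simp: h_def)
        ultimately have "g a0 \<in> \<int>" by (metis Ints_minus minus_minus)
        then show False using a0F by (simp add: F_def)
      qed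
    qed
    obtain d0 where d0: "\<forall>a. a \<notin> F \<longrightarrow> d0 a = 0" "\<exists>a\<in>F. d0 a \<noteq> 0" "\<forall>v\<in>I. excess F d0 v = 0"
      using dir_exists[OF fF False loopF deg] by blast
    have exA: "\<And>v. excess A d0 v = excess F d0 v" using excess_restrict[OF fA FA d0(1)] .
    define t where "t = (if tval U A d0 \<ge> 0 then 1 else (-1::rat))"
    define d where "d = (\<lambda>a. t * d0 a)"
    have t0: "t \<noteq> 0" by (simp add: t_def)
    have dF: "\<forall>a. d a \<noteq> 0 \<longrightarrow> a \<in> A \<and> g a \<notin> \<int>"
      using d0(1) by (auto simp: d_def F_def)
    obtain a1 where a1: "a1 \<in> A" "d a1 \<noteq> 0" using d0(2) t0 FA by (auto simp: d_def)
    have dv: "\<forall>v. excess A d v \<noteq> 0 \<longrightarrow> excess A g v \<notin> \<int>"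
    proof (intro allI impI)
      fix v assume "excess A d v \<noteq> 0"
      then have "excess F d0 v \<noteq> 0" unfolding d_def excess_scale[OF fA] exA by simp
      then show "excess A g v \<notin> \<int>" using d0(3) by (auto simp: I_def)
    qed
    have tv: "tval U A d \<ge> 0" unfolding d_def tval_scale[OF fA] by (simp add: t_def)
    obtain g' where g': "\<forall>a\<in>A. 0 \<le> g' a \<and> g' a \<le> c a" "\<forall>v\<in>V. l v \<le> excess A g' v \<and> excess A g' v \<le> u v"
      "tval U A g \<le> tval U A g'"
      "card {a\<in>A. g' a \<notin> \<int>} + card {v\<in>V. excess A g' v \<notin> \<int>}
       < card {a\<in>A. g a \<notin> \<int>} + card {v\<in>V. excess A g v \<notin> \<int>}"
      using step[OF fA fV cI lu less.prems(1,2) dF a1 dv tv] by blast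
    from less.hyps[OF g'(4) g'(1,2)] obtain f where
      f: "(\<forall>a\<in>A. 0 \<le> f a \<and> f a \<le> c a) \<and> (\<forall>v\<in>V. l v \<le> excess A f v \<and> excess A f v \<le> u v)
       \<and> (\<forall>a\<in>A. f a \<in> \<int>) \<and> tval U A g' \<le> tval U A f" by blast
    then have "tval U A g' \<le> tval U A f" by blast
    then have "tval U A g \<le> tval U A f" using g'(3) by linarith
    then show ?thesis using f by blast
  qed
qed

lemma tval_bound:
  assumes fA: "finite A" and f: "\<forall>a\<in>A. 0 \<le> f a \<and> f a \<le> c a"
  shows "\<bar>tval U A f\<bar> \<le> of_nat (card U) * (\<Sum>a\<in>A. c a)"
proof -
  define C where "C = (\<Sum>a\<in>A. c a)"
  have sb: "0 \<le> (\<Sum>a\<in>{a\<in>A. P a}. f a) \<and> (\<Sum>a\<in>{a\<in>A. P a}. f a) \<le> C" for P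
  proof
    show "0 \<le> (\<Sum>a\<in>{a\<in>A. P a}. f a)" using f by (intro sum_nonneg) auto
    have "(\<Sum>a\<in>{a\<in>A. P a}. f a) \<le> (\<Sum>a\<in>{a\<in>A. P a}. c a)" using f by (intro sum_mono) auto
    also have "\<dots> \<le> C" unfolding C_def using f fA by (intro sum_mono2) auto
    finally show "(\<Sum>a\<in>{a\<in>A. P a}. f a) \<le> C" .
  qed
  have eb: "- C \<le> excess A f v \<and> excess A f v \<le> C" for v
    using sb[of "\<lambda>a. fst a = v"] sb[of "\<lambda>a. snd a = v"] unfolding excess_def by linarith
  have "tval U A f \<le> of_nat (card U) * C" unfolding tval_def using eb by (intro sum_bounded_above) auto
  moreover have "of_nat (card U) * (- C) \<le> tval U A f" unfolding tval_def using eb by (intro sum_bounded_below) auto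
  ultimately show ?thesis unfolding C_def by (simp add: abs_le_iff)
qed

theorem lemma7:
  fixes U W :: "'v set" and A :: "('v \<times> 'v) set"
    and c :: "'v \<times> 'v \<Rightarrow> rat" and B :: "'v \<Rightarrow> rat set"
  assumes inst: "gt_instance U W A c B"
    and cap_int: "\<forall>a\<in>A. c a \<in> \<nat>"
    and B_shape: "\<forall>v\<in>U \<union> W. B v \<subseteq> \<int> \<or>
                   (\<exists>cv dv. cv \<in> \<int> \<and> dv \<in> \<int> \<and> cv \<le> dv \<and> B v = {cv..dv})"
    and feasible: "\<exists>g. is_transshipment U W A c B g"
  shows "\<exists>f. is_transshipment U W A c B f
            \<and> (\<forall>g. is_transshipment U W A c B g \<longrightarrow> tval U A g \<le> tval U A f)
            \<and> (\<forall>a\<in>A. f a \<in> \<int>)"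
proof -
  have tl: "finite U" "finite W" "U \<inter> W = {}" "A \<subseteq> U \<times> W"
    using inst by (auto simp: gt_instance_def two_layered_def)
  have fA: "finite A" using tl by (meson finite_SigmaI finite_subset)
  have fV: "finite (U \<union> W)" using tl by simp
  have loop: "\<forall>a\<in>A. fst a \<noteq> snd a"
  proof
    fix a assume "a \<in> A"
    then have "fst a \<in> U" "snd a \<in> W" using tl(4) by (auto simp: mem_Times_iff)
    then show "fst a \<noteq> snd a" using tl(3) by auto
  qed
  have cI: "\<forall>a\<in>A. c a \<in> \<int>" using cap_int subsetD[OF Nats_subset_Ints] by blast
  have KEY: "\<exists>f. is_transshipment U W A c B f \<and> (\<forall>a\<in>A. f a \<in> \<int>) \<and> tval U A g \<le> tval U A f"
    if g: "is_transshipment U W A c B g" for g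
  proof -
    define P where "P = (\<lambda>v (q::rat \<times> rat). fst q \<in> \<int> \<and> snd q \<in> \<int> \<and> B v = {fst q..snd q})"
    define p where "p = (\<lambda>v. SOME q. P v q)"
    have pv: "fst (p v) \<in> \<int> \<and> snd (p v) \<in> \<int> \<and> B v = {fst (p v)..snd (p v)}"
      if vV: "v \<in> U \<union> W" and nB: "\<not> B v \<subseteq> \<int>" for v
    proof -
      have "B v \<subseteq> \<int> \<or> (\<exists>cv dv. cv \<in> \<int> \<and> dv \<in> \<int> \<and> cv \<le> dv \<and> B v = {cv..dv})"
        using bspec[OF B_shape vV] .
      then have "\<exists>cv dv. cv \<in> \<int> \<and> dv \<in> \<int> \<and> cv \<le> dv \<and> B v = {cv..dv}"
      proof (rule disjE)
        assume "B v \<subseteq> \<int>" then show ?thesis using nB by (rule notE[rotated])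
      qed
      then obtain cv dv where "cv \<in> \<int>" "dv \<in> \<int>" "B v = {cv..dv}" by (elim exE conjE)
      then have "P v (cv, dv)" unfolding P_def by simp
      then have "P v (p v)" unfolding p_def by (rule someI)
      then show ?thesis unfolding P_def .
    qed
    define l where "l = (\<lambda>v. if B v \<subseteq> \<int> then excess A g v else fst (p v))"
    define u where "u = (\<lambda>v. if B v \<subseteq> \<int> then excess A g v else snd (p v))"
    have garc: "\<forall>a\<in>A. 0 \<le> g a \<and> g a \<le> c a" and gB: "\<forall>v\<in>U \<union> W. excess A g v \<in> B v"
      using g by (auto simp: is_transshipment_def)
    have lu: "\<forall>v\<in>U \<union> W. l v \<in> \<int> \<and> u v \<in> \<int>"
      using gB pv unfolding l_def u_def by auto
    have gv: "\<forall>v\<in>U \<union> W. l v \<le> excess A g v \<and> excess A g v \<le> u v"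
    proof
      fix v assume v: "v \<in> U \<union> W"
      show "l v \<le> excess A g v \<and> excess A g v \<le> u v"
      proof (cases "B v \<subseteq> \<int>")
        case True then show ?thesis by (simp add: l_def u_def)
      next
        case False
        have "excess A g v \<in> B v" using gB v by blast
        then have "excess A g v \<in> {fst (p v)..snd (p v)}" using pv[OF v False] by simp
        then show ?thesis using False by (simp add: l_def u_def)
      qed
    qed
    obtain f where f: "\<forall>a\<in>A. 0 \<le> f a \<and> f a \<le> c a" "\<forall>v\<in>U \<union> W. l v \<le> excess A f v \<and> excess A f v \<le> u v"
       "\<forall>a\<in>A. f a \<in> \<int>" "tval U A g \<le> tval U A f"
      using core[OF fA fV cI lu loop garc gv, of U] by blast
    have "\<forall>v\<in>U \<union> W. excess A f v \<in> B v"
    proof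
      fix v assume v: "v \<in> U \<union> W"
      show "excess A f v \<in> B v"
      proof (cases "B v \<subseteq> \<int>")
        case True
        have "l v \<le> excess A f v \<and> excess A f v \<le> u v" using f(2) v by blast
        then have "excess A f v = excess A g v" using True by (simp add: l_def u_def)
        then show ?thesis using gB v by simp
      next
        case False
        have "l v \<le> excess A f v \<and> excess A f v \<le> u v" using f(2) v by blast
        then have "excess A f v \<in> {fst (p v)..snd (p v)}" using False by (simp add: l_def u_def)
        then show ?thesis using pv[OF v False] by simp
      qed
    qed
    then have "is_transshipment U W A c B f" using f(1) by (simp add: is_transshipment_def)
    then show ?thesis using f(3,4) by blast
  qed
  have tint: "tval U A f \<in> \<int>" if "\<forall>a\<in>A. f a \<in> \<int>" for f
    unfolding tval_def excess_def using that by (intro Ints_sum Ints_diff) auto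
  define C where "C = of_nat (card U) * (\<Sum>a\<in>A. c a)"
  define M where "M = \<lceil>C\<rceil>"
  define Z where "Z = {k::int. \<exists>f. is_transshipment U W A c B f \<and> (\<forall>a\<in>A. f a \<in> \<int>) \<and> tval U A f = of_int k}"
  have ZM: "Z \<subseteq> {-M..M}"
  proof
    fix k assume "k \<in> Z"
    then obtain f where f: "is_transshipment U W A c B f" "tval U A f = of_int k" by (auto simp: Z_def)
    then have "\<bar>of_int k\<bar> \<le> C" using tval_bound[OF fA, of f c U] by (auto simp: is_transshipment_def C_def)
    then have "of_int k \<le> C" "- C \<le> of_int k" by linarith+
    moreover have "C \<le> of_int M" by (simp add: M_def)
    ultimately have "of_int k \<le> (of_int M :: rat)" "(of_int (- M) :: rat) \<le> of_int k" by linarith+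
    then show "k \<in> {-M..M}" by simp
  qed
  have fZ: "finite Z" using ZM finite_subset by blast
  obtain g0 where "is_transshipment U W A c B g0" using feasible by blast
  from KEY[OF this] obtain f0 where f0: "is_transshipment U W A c B f0" "\<forall>a\<in>A. f0 a \<in> \<int>" by blast
  obtain k0 where "tval U A f0 = of_int k0" using tint[OF f0(2)] Ints_cases by metis
  then have "k0 \<in> Z" using f0 by (auto simp: Z_def)
  then have neZ: "Z \<noteq> {}" by blast
  have "Max Z \<in> Z" using fZ neZ by simp
  then obtain f where f: "is_transshipment U W A c B f" "\<forall>a\<in>A. f a \<in> \<int>" "tval U A f = of_int (Max Z)"
    by (auto simp: Z_def)
  have "tval U A g \<le> tval U A f" if g: "is_transshipment U W A c B g" for g
  proof -
    obtain f' where f': "is_transshipment U W A c B f'" "\<forall>a\<in>A. f' a \<in> \<int>" "tval U A g \<le> tval U A f'"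
      using KEY[OF g] by blast
    obtain k where k: "tval U A f' = of_int k" using tint[OF f'(2)] Ints_cases by metis
    then have "k \<in> Z" using f' by (auto simp: Z_def)
    then have "k \<le> Max Z" using fZ by simp
    then have "tval U A f' \<le> tval U A f" using k f(3) by simp
    then show ?thesis using f'(3) by linarith
  qed
  then show ?thesis using f(1,2) by blast
qed

end
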